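(* Let $f$ be an LLD meromorphic function on $\mathbb{C}$ whose divisor $\mathrm{Div}(f)=\sum_\rho n_\rho(f)\cdot(\rho)$ has exponent of convergence $\alpha>0$. Let $D$ be the divisor $D=-\sum_\rho\sum_{k\ge0} n_\rho(f)\cdot(\rho-k)$, i.e. $n_\rho(D)=-\sum_{k\ge 0} n_{\rho+k}(f)$. Then $D$ is LLD and has exponent of convergence $\alpha+1$.
   Context: $\mathbb{C}_+=\{\Re s>0\}$; $n_\rho(h)$ denotes the order of the meromorphic function $h$ at $\rho$ (positive for zeros, negative for poles), and $\mathrm{Div}(h)=\sum_\rho n_\rho(h)\cdot(\rho)$. A function is LLD if it has no zeros nor poles in $\mathbb{C}_+$; a divisor is LLD if its support lies in $\{\Re s\le 0\}$. A divisor $D=\sum_\rho n_\rho\cdot(\rho)$ has exponent of convergence $\alpha>0$ if $\|D\|_\alpha=\sum_{\rho\neq0}|n_\rho|\,|\rho|^{-\alpha}<+\infty$. (Note $n_{\rho+k}(f)=0$ once $\rho+k\in\mathbb{C}_+$, so the sums defining $n_\rho(D)$ are finite.) *)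

theory Defs
  imports "HOL-Complex_Analysis.Complex_Analysis"
begin

definition divisor_of :: "(complex \<Rightarrow> complex) \<Rightarrow> complex \<Rightarrow> int" where
  "divisor_of f = (\<lambda>\<rho>. zorder f \<rho>)"

definition LLD_fun :: "(complex \<Rightarrow> complex) \<Rightarrow> bool" where
  "LLD_fun f \<longleftrightarrow> (\<forall>s. 0 < Re s \<longrightarrow> zorder f s = 0)"

definition LLD_div :: "(complex \<Rightarrow> int) \<Rightarrow> bool" where
  "LLD_div D \<longleftrightarrow> (\<forall>\<rho>. D \<rho> \<noteq> 0 \<longrightarrow> Re \<rho> \<le> 0)"

definition has_exp_conv :: "(complex \<Rightarrow> int) \<Rightarrow> real \<Rightarrow> bool" where
  "has_exp_conv D \<alpha> \<longleftrightarrow>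
     (\<lambda>\<rho>. real_of_int \<bar>D \<rho>\<bar> * norm \<rho> powr (-\<alpha>)) summable_on (UNIV - {0})"

text \<open>The divisor D with n_rho(D) = - sum_{k>=0} n_{rho+k}(f); the sum is over the
  (finite, for LLD f) set of k with nonzero term.\<close>
definition shifted_divisor :: "(complex \<Rightarrow> complex) \<Rightarrow> complex \<Rightarrow> int" where
  "shifted_divisor f \<rho> =
     - (\<Sum>k\<in>{k::nat. divisor_of f (\<rho> + of_nat k) \<noteq> 0}. divisor_of f (\<rho> + of_nat k))"

end

theory Submission
  imports Defs
begin


lemma divisor_finite_ball:
  fixes f :: "complex \<Rightarrow> complex"
  assumes mero: "f meromorphic_on UNIV"
    and nz: "\<exists>z. \<exists>\<^sub>F w in at z. f w \<noteq> 0"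
  shows "finite {z. divisor_of f z \<noteq> 0 \<and> norm z \<le> 1}"
proof -
  have ev: "eventually (\<lambda>z. f z \<noteq> 0) (cosparse UNIV)"
  proof -
    have "eventually (\<lambda>z. f z = 0) (cosparse UNIV) \<or> eventually (\<lambda>z. f z \<noteq> 0) (cosparse UNIV)"
      by (rule meromorphic_imp_constant_or_avoid[OF mero]) auto
    moreover have "\<not> eventually (\<lambda>z. f z = 0) (cosparse UNIV)"
    proof
      assume "eventually (\<lambda>z. f z = 0) (cosparse UNIV)"
      then have "\<forall>z. eventually (\<lambda>z. f z = 0) (at z)"
        using eventually_cosparse_imp_eventually_at by blast
      with nz show False by (auto simp: frequently_def)
    qed
    ultimately show ?thesis by blast
  qed
  have evat: "eventually (\<lambda>w. f w \<noteq> 0) (at z)" for z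
    using eventually_cosparse_imp_eventually_at[OF ev] by blast
  have ev2: "eventually (\<lambda>z. \<not> is_pole f z) (cosparse UNIV)"
    by (rule meromorphic_on_imp_not_pole_cosparse[OF mero])
  have ev3: "eventually (\<lambda>z. \<not> isolated_zero f z) (cosparse UNIV)"
    by (rule meromorphic_on_imp_not_zero_cosparse[OF mero])
  have "eventually (\<lambda>z. divisor_of f z = 0) (cosparse UNIV)"
    using ev2 ev3
  proof eventually_elim
    case (elim z)
    have m: "f meromorphic_on {z}" using meromorphic_on_subset[OF mero] by blast
    show ?case
    proof (rule ccontr)
      assume "divisor_of f z \<noteq> 0"
      then have "zorder f z > 0 \<or> zorder f z < 0" by (auto simp: divisor_of_def)
      then show False
        using zorder_pos_imp_isolated_zero[OF m evat] zorder_neg_imp_is_pole[OF m evat] elim by blast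
    qed
  qed
  then have "{z. divisor_of f z \<noteq> 0} sparse_in UNIV" by (simp add: eventually_cosparse)
  then have "{z. divisor_of f z \<noteq> 0} sparse_in cball 0 1" by (rule sparse_in_subset) auto
  then have "finite (cball 0 1 \<inter> {z. divisor_of f z \<noteq> 0})"
    by (rule sparse_in_compact_finite) auto
  then show ?thesis by (rule finite_subset[rotated]) auto
qed



lemma key_ineq:
  fixes x a :: real
  assumes x: "x > 0" and a: "a > 0"
  shows "a * (x+1) powr (-(a+1)) \<le> x powr (-a) - (x+1) powr (-a)"
proof -
  define y where "y = x + 1"
  have y: "y > 0" using x by (simp add: y_def)
  define u where "u = y / x"
  have u: "u > 0" using x y by (simp add: u_def)
  have lnu: "ln u \<ge> 1 / y"
  proof -
    have "ln (x / y) \<le> x / y - 1" using ln_le_minus_one x y by simp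
    moreover have "ln (x/y) = - ln u" using x y by (simp add: u_def ln_div)
    moreover have "x / y - 1 = - (1/y)" using y by (simp add: y_def field_simps)
    ultimately show ?thesis by linarith
  qed
  have "u powr a = exp (a * ln u)" using u by (simp add: powr_def)
  also have "\<dots> \<ge> 1 + a * ln u" by (rule exp_ge_add_one_self)
  finally have ua0: "u powr a \<ge> 1 + a * ln u" .
  have "a * (1 / y) \<le> a * ln u" using lnu a by (intro mult_left_mono) auto
  with ua0 have ua: "u powr a \<ge> 1 + a / y" by simp
  have xe: "x powr (-a) = y powr (-a) * u powr a"
    using x y by (simp add: u_def powr_divide powr_minus field_simps)
  have ye: "y powr (-(a+1)) = y powr (-a) / y"
  proof -
    have "y powr (-(a+1)) = y powr (-a + -1)" by (simp add: algebra_simps)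
    also have "\<dots> = y powr (-a) * y powr (-1)" by (rule powr_add)
    also have "y powr (-1) = 1 / y" using y by (simp add: powr_minus divide_inverse)
    finally show ?thesis by simp
  qed
  have yp: "y powr (-a) > 0" using y by simp
  have "x powr (-a) \<ge> y powr (-a) * (1 + a / y)"
    unfolding xe by (rule mult_left_mono[OF ua]) (use yp in simp)
  then show ?thesis unfolding y_def[symmetric] ye by (simp add: field_simps)
qed

lemma tail_bound:
  fixes r a :: real
  assumes r: "r > 0" and a: "a > 0"
  shows "(\<Sum>k=1..N. (r + real k) powr (-(a+1))) \<le> (r powr (-a) - (r + real N) powr (-a)) / a"
proof (induction N)
  case 0
  then show ?case by simp
next
  case (Suc N)
  have "(\<Sum>k=1..Suc N. (r + real k) powr (-(a+1))) =
        (\<Sum>k=1..N. (r + real k) powr (-(a+1))) + (r + real (Suc N)) powr (-(a+1))"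
    by simp
  also have "\<dots> \<le> (r powr (-a) - (r + real N) powr (-a)) / a
      + ((r + real N) powr (-a) - (r + real N + 1) powr (-a)) / a"
    using Suc key_ineq[of "r + real N" a] r a by (simp add: field_simps add_ac)
  also have "\<dots> = (r powr (-a) - (r + real N + 1) powr (-a)) / a"
    by (simp add: add_divide_distrib[symmetric])
  also have "\<dots> = (r powr (-a) - (r + real (Suc N)) powr (-a)) / a"
    by (simp add: add_ac)
  finally show ?case .
qed

lemma tail_bound':
  fixes r a :: real
  assumes r: "r > 0" and a: "a > 0"
  shows "(\<Sum>k=1..N. (r + real k) powr (-(a+1))) \<le> r powr (-a) / a"
proof -
  have "(r + real N) powr (-a) \<ge> 0" by simp
  then have "(r powr (-a) - (r + real N) powr (-a)) / a \<le> r powr (-a) / a"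
    using a by (simp add: divide_right_mono)
  with tail_bound[OF r a, of N] show ?thesis by linarith
qed

lemma zero_bound:
  fixes a :: real
  assumes a: "a > 0"
  shows "(\<Sum>k=0..N. real k powr (-(a+1))) \<le> 1 + 1 / a"
proof (cases N)
  case 0
  then show ?thesis using a by simp
next
  case (Suc M)
  have "(\<Sum>k=0..N. real k powr (-(a+1))) = (\<Sum>k=1..Suc M. real k powr (-(a+1)))"
    using Suc by (simp add: sum.atLeast_Suc_atMost)
  also have "\<dots> = 1 + (\<Sum>k=Suc 1..Suc M. real k powr (-(a+1)))"
    by (simp add: sum.atLeast_Suc_atMost)
  also have "(\<Sum>k=Suc 1..Suc M. real k powr (-(a+1))) = (\<Sum>k=1..M. real (Suc k) powr (-(a+1)))"
    by (rule sum.shift_bounds_cl_Suc_ivl)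
  also have "\<dots> = (\<Sum>k=1..M. (1 + real k) powr (-(a+1)))" by simp
  also have "\<dots> \<le> 1 powr (-a) / a" by (rule tail_bound') (use a in auto)
  finally show ?thesis by simp
qed

lemma norm_shift_ge:
  fixes s :: complex and k :: real
  assumes "Re s \<le> 0" "k \<ge> 0"
  shows "norm s \<le> norm (s - of_real k)" "k \<le> norm (s - of_real k)"
proof -
  have "(norm s)^2 \<le> (norm (s - of_real k))^2"
  proof -
    have h: "k * Re s \<le> 0" using assms by (simp add: mult_nonneg_nonpos)
    have e: "(Re s - k)^2 = (Re s)^2 - 2 * (k * Re s) + k^2" by (simp add: power2_diff algebra_simps)
    have k2: "(0::real) \<le> k^2" by simp
    have "(Re s)^2 \<le> (Re s - k)^2" using e h k2 by linarith
    then have "(Re s)^2 \<le> (Re (s - of_real k))^2" by simp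
    then show ?thesis unfolding cmod_power2 by simp
  qed
  then show "norm s \<le> norm (s - of_real k)" by (rule power2_le_imp_le) simp
  have "k \<le> \<bar>Re (s - of_real k)\<bar>" using assms by simp
  also have "\<dots> \<le> norm (s - of_real k)" by (rule abs_Re_le_cmod)
  finally show "k \<le> norm (s - of_real k)" .
qed



definition cbnd :: "real \<Rightarrow> complex \<Rightarrow> real" where
  "cbnd a s = (if s = 0 then 1 + 1 / a
     else 2 powr (a+1) * (norm s powr (-(a+1)) + norm s powr (-a) / a))"

lemma cbnd_nonneg: "a > 0 \<Longrightarrow> cbnd a s \<ge> 0"
  by (simp add: cbnd_def)

lemma inner_bound:
  fixes s :: complex and a :: real
  assumes s: "Re s \<le> 0" and a: "a > 0"
  shows "(\<Sum>k=0..N. norm (s - of_nat k) powr (-(a+1))) \<le> cbnd a s"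
proof (cases "s = 0")
  case True
  then show ?thesis using zero_bound[OF a, of N] by (simp add: cbnd_def)
next
  case False
  define r where "r = norm s"
  have r: "r > 0" using False by (simp add: r_def)
  have trm: "norm (s - of_nat k) powr (-(a+1)) \<le> 2 powr (a+1) * (r + real k) powr (-(a+1))" for k
  proof -
    have e: "(of_nat k :: complex) = of_real (real k)" by simp
    have h1: "r \<le> norm (s - of_nat k)" "real k \<le> norm (s - of_nat k)"
      using norm_shift_ge[OF s, of "real k"] unfolding e r_def by auto
    have pos: "(r + real k) / 2 > 0" using r by simp
    have "norm (s - of_nat k) powr (-(a+1)) \<le> ((r + real k) / 2) powr (-(a+1))"
      using a pos h1 by (intro powr_mono2') auto
    also have "\<dots> = (r + real k) powr (-(a+1)) / 2 powr (-(a+1))"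
      by (rule powr_divide)
    also have "\<dots> = 2 powr (a+1) * (r + real k) powr (-(a+1))"
      unfolding powr_minus[of 2 "a+1"] by (simp add: divide_inverse)
    finally show ?thesis .
  qed
  have "(\<Sum>k=0..N. norm (s - of_nat k) powr (-(a+1))) \<le> (\<Sum>k=0..N. 2 powr (a+1) * (r + real k) powr (-(a+1)))"
    by (rule sum_mono) (rule trm)
  also have "\<dots> = 2 powr (a+1) * (\<Sum>k=0..N. (r + real k) powr (-(a+1)))"
    by (simp add: sum_distrib_left)
  also have "(\<Sum>k=0..N. (r + real k) powr (-(a+1))) = r powr (-(a+1)) + (\<Sum>k=1..N. (r + real k) powr (-(a+1)))"
    by (simp add: sum.atLeast_Suc_atMost)
  also have "\<dots> \<le> r powr (-(a+1)) + r powr (-a) / a"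
    using tail_bound'[OF r a, of N] by simp
  finally have "(\<Sum>k=0..N. norm (s - of_nat k) powr (-(a+1))) \<le> 2 powr (a+1) * (r powr (-(a+1)) + r powr (-a) / a)"
    by (simp add: mult_left_mono)
  then show ?thesis using False by (simp add: cbnd_def r_def)
qed



theorem proposition2p5:
  fixes f :: "complex \<Rightarrow> complex" and \<alpha> :: real
  assumes "f meromorphic_on UNIV"
    and "\<exists>z. \<exists>\<^sub>F w in at z. f w \<noteq> 0"
    and "LLD_fun f"
    and "\<alpha> > 0"
    and "has_exp_conv (divisor_of f) \<alpha>"
  shows "LLD_div (shifted_divisor f) \<and> has_exp_conv (shifted_divisor f) (\<alpha> + 1)"
proof -
  define n where "n = divisor_of f"
  define D where "D = shifted_divisor f"
  note a = assms(4)
  have lld: "Re z \<le> 0" if "n z \<noteq> 0" for z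
    using assms(3) that unfolding LLD_fun_def n_def divisor_of_def by (meson not_le)
  have Dsum: "D \<rho> = - (\<Sum>k\<in>{k::nat. n (\<rho> + of_nat k) \<noteq> 0}. n (\<rho> + of_nat k))" for \<rho>
    by (simp add: D_def n_def shifted_divisor_def)
  have part1: "LLD_div D"
    unfolding LLD_div_def
  proof (intro allI impI)
    fix \<rho> assume "D \<rho> \<noteq> 0"
    show "Re \<rho> \<le> 0"
    proof (rule ccontr)
      assume "\<not> Re \<rho> \<le> 0"
      then have "{k::nat. n (\<rho> + of_nat k) \<noteq> 0} = {}"
        using lld by force
      then have "D \<rho> = 0" by (simp add: Dsum)
      with \<open>D \<rho> \<noteq> 0\<close> show False by simp
    qed
  qed
  define G where "G = (\<lambda>s. real_of_int \<bar>n s\<bar> * cbnd \<alpha> s)"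
  have Gnn: "G s \<ge> 0" for s using cbnd_nonneg[OF a] by (simp add: G_def)
  have H: "(\<lambda>s. real_of_int \<bar>n s\<bar> * norm s powr (-\<alpha>)) summable_on (UNIV - {0})"
    using assms(5) by (simp add: has_exp_conv_def n_def)
  define B where "B = {s::complex. 1 < norm s}"
  have GB: "G summable_on B"
  proof (rule summable_on_comparison_test)
    show "(\<lambda>s. (2 powr (\<alpha>+1) * (1 + 1/\<alpha>)) * (real_of_int \<bar>n s\<bar> * norm s powr (-\<alpha>))) summable_on B"
      by (rule summable_on_cmult_right, rule summable_on_subset[OF H]) (auto simp: B_def)
    show "0 \<le> G s" for s by (rule Gnn)
    fix s assume "s \<in> B"
    then have s1: "1 < norm s" and s0: "s \<noteq> 0" by (auto simp: B_def)
    have "norm s powr (-(\<alpha>+1)) \<le> norm s powr (-\<alpha>)"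
      using s1 by (intro powr_mono) auto
    then have "cbnd \<alpha> s \<le> 2 powr (\<alpha>+1) * (norm s powr (-\<alpha>) + norm s powr (-\<alpha>) / \<alpha>)"
      using s0 by (simp add: cbnd_def)
    also have "\<dots> = (2 powr (\<alpha>+1) * (1 + 1/\<alpha>)) * norm s powr (-\<alpha>)"
      by (simp add: algebra_simps)
    finally have "cbnd \<alpha> s \<le> (2 powr (\<alpha>+1) * (1 + 1/\<alpha>)) * norm s powr (-\<alpha>)" .
    then have "G s \<le> real_of_int \<bar>n s\<bar> * ((2 powr (\<alpha>+1) * (1 + 1/\<alpha>)) * norm s powr (-\<alpha>))"
      unfolding G_def by (intro mult_left_mono) auto
    then show "G s \<le> (2 powr (\<alpha>+1) * (1 + 1/\<alpha>)) * (real_of_int \<bar>n s\<bar> * norm s powr (-\<alpha>))"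
      by (simp add: algebra_simps)
  qed
  define Fs where "Fs = {z. n z \<noteq> 0 \<and> norm z \<le> 1}"
  have finFs: "finite Fs"
    unfolding Fs_def n_def by (rule divisor_finite_ball[OF assms(1,2)])
  have GnB: "G summable_on (UNIV - B)"
  proof -
    have "G summable_on Fs" using finFs by simp
    moreover have "G summable_on (UNIV - B) \<longleftrightarrow> G summable_on Fs"
      by (rule summable_on_cong_neutral) (auto simp: Fs_def B_def G_def)
    ultimately show ?thesis by simp
  qed
  have Gsum: "G summable_on UNIV"
    using summable_on_union[OF GB GnB] by simp
  define M where "M = infsum G UNIV"
  have bound: "(\<Sum>\<rho>\<in>F. real_of_int \<bar>D \<rho>\<bar> * norm \<rho> powr (-(\<alpha>+1))) \<le> M" if F: "finite F" for F
  proof -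
    define w where "w = (\<lambda>\<rho>::complex. norm \<rho> powr (-(\<alpha>+1)))"
    define A where "A = (\<lambda>\<rho> (k::nat). real_of_int \<bar>n (\<rho> + of_nat k)\<bar>)"
    define N where "N = Max ((\<lambda>\<rho>. nat \<lceil>- Re \<rho>\<rceil>) ` F)"
    have sub: "{k::nat. n (\<rho> + of_nat k) \<noteq> 0} \<subseteq> {0..N}" if "\<rho> \<in> F" for \<rho>
    proof
      fix k assume "k \<in> {k::nat. n (\<rho> + of_nat k) \<noteq> 0}"
      then have "Re (\<rho> + of_nat k) \<le> 0" using lld[of "\<rho> + of_nat k"] by simp
      then have "real k \<le> - Re \<rho>" by simp
      then have "k \<le> nat \<lceil>- Re \<rho>\<rceil>" by linarith
      also have "\<dots> \<le> N" unfolding N_def using F that by (intro Max_ge) auto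
      finally show "k \<in> {0..N}" by simp
    qed
    have Dle: "real_of_int \<bar>D \<rho>\<bar> \<le> (\<Sum>k=0..N. A \<rho> k)" if "\<rho> \<in> F" for \<rho>
    proof -
      have "D \<rho> = - (\<Sum>k=0..N. n (\<rho> + of_nat k))"
        unfolding Dsum by (subst sum.mono_neutral_left[OF _ sub[OF that]]) auto
      then have "\<bar>D \<rho>\<bar> \<le> (\<Sum>k=0..N. \<bar>n (\<rho> + of_nat k)\<bar>)"
        using sum_abs[of "\<lambda>k. n (\<rho> + of_nat k)" "{0..N}"] by simp
      then show ?thesis unfolding A_def by (metis of_int_le_iff of_int_sum)
    qed
    define T where "T = (\<Union>k\<in>{0..N}. (\<lambda>\<rho>. \<rho> + of_nat k) ` F)"
    have finT: "finite T" using F by (simp add: T_def)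
    define h where "h = (\<lambda>s (k::nat). real_of_int \<bar>n s\<bar> * norm (s - of_nat k) powr (-(\<alpha>+1)))"
    have hnn: "h s k \<ge> 0" for s k by (simp add: h_def)
    have step: "(\<Sum>\<rho>\<in>F. A \<rho> k * w \<rho>) \<le> (\<Sum>s\<in>T. h s k)" if k: "k \<in> {0..N}" for k
    proof -
      have inj: "inj_on (\<lambda>\<rho>. \<rho> + of_nat k) F" by (auto simp: inj_on_def)
      have "(\<Sum>\<rho>\<in>F. A \<rho> k * w \<rho>) = (\<Sum>s\<in>(\<lambda>\<rho>. \<rho> + of_nat k) ` F. h s k)"
        by (subst sum.reindex[OF inj]) (simp add: h_def A_def w_def)
      also have "\<dots> \<le> (\<Sum>s\<in>T. h s k)"
        by (rule sum_mono2[OF finT]) (use k hnn in \<open>auto simp: T_def\<close>)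
      finally show ?thesis .
    qed
    have "(\<Sum>\<rho>\<in>F. real_of_int \<bar>D \<rho>\<bar> * w \<rho>) \<le> (\<Sum>\<rho>\<in>F. (\<Sum>k=0..N. A \<rho> k) * w \<rho>)"
      by (rule sum_mono, rule mult_right_mono) (use Dle in \<open>auto simp: w_def\<close>)
    also have "\<dots> = (\<Sum>k=0..N. \<Sum>\<rho>\<in>F. A \<rho> k * w \<rho>)"
      by (simp add: sum_distrib_right sum.swap[of _ F])
    also have "\<dots> \<le> (\<Sum>k=0..N. \<Sum>s\<in>T. h s k)"
      by (rule sum_mono) (rule step)
    also have "\<dots> = (\<Sum>s\<in>T. real_of_int \<bar>n s\<bar> * (\<Sum>k=0..N. norm (s - of_nat k) powr (-(\<alpha>+1))))"
      by (simp add: h_def sum_distrib_left sum.swap[of _ T])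
    also have "\<dots> \<le> (\<Sum>s\<in>T. G s)"
    proof (rule sum_mono)
      fix s assume "s \<in> T"
      show "real_of_int \<bar>n s\<bar> * (\<Sum>k=0..N. norm (s - of_nat k) powr (-(\<alpha>+1))) \<le> G s"
      proof (cases "n s = 0")
        case True then show ?thesis by (simp add: G_def)
      next
        case False
        then show ?thesis unfolding G_def
          by (intro mult_left_mono inner_bound lld a) auto
      qed
    qed
    also have "\<dots> \<le> M"
      unfolding M_def by (rule finite_sum_le_infsum[OF Gsum finT]) (auto simp: Gnn)
    finally show ?thesis by (simp add: w_def)
  qed
  have part2: "has_exp_conv D (\<alpha> + 1)"
    unfolding has_exp_conv_def
  proof (rule nonneg_bdd_above_summable_on)
    show "bdd_above ((\<lambda>F. \<Sum>\<rho>\<in>F. real_of_int \<bar>D \<rho>\<bar> * norm \<rho> powr (-(\<alpha>+1))) ` {F. F \<subseteq> UNIV - {0} \<and> finite F})"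
      using bound by (intro bdd_aboveI[where M=M]) auto
  qed auto
  show ?thesis using part1 part2 by (simp add: D_def)
qed

end
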